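(* Let $v$ be a vertex of degree at least $4$ in a graph $G$, and let $va, vb$ be two distinct edges incident with $v$ where $a\ne b$. Let $G_{[v,ab]}=G-v+ab$ be the graph obtained by deleting $v$ and adding a new edge $ab$. If $G_{[v,ab]}\in\mathcal{S}_3$, then $G\in\mathcal{S}_3$.
   Context: Graphs may have parallel edges but no loops. $G\in\mathcal{S}_3$ means: for every $\beta:V(G)\to\mathbb{Z}_3$ with $\sum_v\beta(v)\equiv0\pmod3$ there is a strongly-connected orientation $D$ of $G$ with $d^+_D(v)-d^-_D(v)\equiv\beta(v)\pmod3$ for all $v$. *)

theory Defs
  imports Main
begin

definition multigraph :: "'v set \<Rightarrow> 'e set \<Rightarrow> ('e \<Rightarrow> 'v \<times> 'v) \<Rightarrow> bool" where
  "multigraph V E ends \<longleftrightarrow> finite V \<and> finite E \<and>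
     (\<forall>e\<in>E. fst (ends e) \<in> V \<and> snd (ends e) \<in> V \<and> fst (ends e) \<noteq> snd (ends e))"

definition incident :: "('e \<Rightarrow> 'v \<times> 'v) \<Rightarrow> 'e \<Rightarrow> 'v \<Rightarrow> bool" where
  "incident ends e x \<longleftrightarrow> fst (ends e) = x \<or> snd (ends e) = x"

definition degree :: "'e set \<Rightarrow> ('e \<Rightarrow> 'v \<times> 'v) \<Rightarrow> 'v \<Rightarrow> nat" where
  "degree E ends x = card {e\<in>E. incident ends e x}"

definition is_orientation :: "'e set \<Rightarrow> ('e \<Rightarrow> 'v \<times> 'v) \<Rightarrow> ('e \<Rightarrow> 'v \<times> 'v) \<Rightarrow> bool" where
  "is_orientation E ends D \<longleftrightarrow> (\<forall>e\<in>E. D e = ends e \<or> D e = prod.swap (ends e))"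

definition strongly_connected :: "'v set \<Rightarrow> 'e set \<Rightarrow> ('e \<Rightarrow> 'v \<times> 'v) \<Rightarrow> bool" where
  "strongly_connected V E D \<longleftrightarrow> (\<forall>x\<in>V. \<forall>y\<in>V. (x, y) \<in> (D ` E)\<^sup>*)"

definition outdeg :: "'e set \<Rightarrow> ('e \<Rightarrow> 'v \<times> 'v) \<Rightarrow> 'v \<Rightarrow> nat" where
  "outdeg E D x = card {e\<in>E. fst (D e) = x}"

definition indeg :: "'e set \<Rightarrow> ('e \<Rightarrow> 'v \<times> 'v) \<Rightarrow> 'v \<Rightarrow> nat" where
  "indeg E D x = card {e\<in>E. snd (D e) = x}"

text \<open>G \<in> S_3: for every beta : V \<rightarrow> Z_3 (represented by integers mod 3) with zero sum,
  there is a strongly connected orientation D with outdeg - indeg \<equiv> beta (mod 3).\<close>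
definition S3 :: "'v set \<Rightarrow> 'e set \<Rightarrow> ('e \<Rightarrow> 'v \<times> 'v) \<Rightarrow> bool" where
  "S3 V E ends \<longleftrightarrow>
     (\<forall>\<beta> :: 'v \<Rightarrow> int. (\<Sum>x\<in>V. \<beta> x) mod 3 = 0 \<longrightarrow>
        (\<exists>D. is_orientation E ends D \<and> strongly_connected V E D \<and>
             (\<forall>x\<in>V. (int (outdeg E D x) - int (indeg E D x)) mod 3 = \<beta> x mod 3)))"

text \<open>G_[v,ab] = G - v + ab: delete v (and its incident edges), add a new edge ab
  (labelled None; old edges e become Some e).\<close>
definition lift_V :: "'v set \<Rightarrow> 'v \<Rightarrow> 'v set" where
  "lift_V V v = V - {v}"

definition lift_E :: "'e set \<Rightarrow> ('e \<Rightarrow> 'v \<times> 'v) \<Rightarrow> 'v \<Rightarrow> 'e option set" where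
  "lift_E E ends v = insert None (Some ` {e\<in>E. \<not> incident ends e v})"

definition lift_ends :: "('e \<Rightarrow> 'v \<times> 'v) \<Rightarrow> 'v \<Rightarrow> 'v \<Rightarrow> 'e option \<Rightarrow> 'v \<times> 'v" where
  "lift_ends ends a b eo = (case eo of None \<Rightarrow> (a, b) | Some e \<Rightarrow> ends e)"

end

theory Submission
  imports Defs
begin

definition gg :: "'v \<times> 'v \<Rightarrow> 'v \<Rightarrow> int" where
  "gg p x = (if fst p = x then 1 else 0) - (if snd p = x then 1 else 0)"

lemma card_filter_int:
  assumes "finite E"
  shows "int (card {e\<in>E. P e}) = (\<Sum>e\<in>E. if P e then 1 else 0)"
proof -
  have "int (card {e\<in>E. P e}) = (\<Sum>e\<in>{e\<in>E. P e}. (1::int))" by simp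
  also have "\<dots> = (\<Sum>e\<in>E. if P e then 1 else 0)" by (rule sum.inter_filter[OF assms])
  finally show ?thesis .
qed

lemma net_eq:
  assumes "finite E"
  shows "int (outdeg E D x) - int (indeg E D x) = (\<Sum>e\<in>E. gg (D e) x)"
  unfolding outdeg_def indeg_def gg_def
  by (simp add: card_filter_int[OF assms] sum_subtractf)

lemma g_sum_zero:
  assumes "finite V" "fst p \<in> V" "snd p \<in> V"
  shows "(\<Sum>x\<in>V. gg p x) = 0"
  unfolding gg_def using assms by (simp add: sum_subtractf sum.delta sum.delta')

lemma mod3a: "X mod 3 = 0 \<Longrightarrow> C mod 3 = B mod 3 \<Longrightarrow> (X - B + C) mod (3::int) = 0"
  by presburger

lemma mod3b: "N' mod 3 = (B - C) mod 3 \<Longrightarrow> (N' + C) mod (3::int) = B mod 3"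
  by presburger

theorem mainTheorem9:
  fixes V :: "'v set" and E :: "'e set" and ends :: "'e \<Rightarrow> 'v \<times> 'v"
    and v a b :: 'v and e1 e2 :: 'e
  assumes "multigraph V E ends"
    and "v \<in> V"
    and "degree E ends v \<ge> 4"
    and "e1 \<in> E" and "e2 \<in> E" and "e1 \<noteq> e2"
    and "ends e1 = (v, a) \<or> ends e1 = (a, v)"
    and "ends e2 = (v, b) \<or> ends e2 = (b, v)"
    and "a \<noteq> b"
    and "S3 (lift_V V v) (lift_E E ends v) (lift_ends ends a b)"
  shows "S3 V E ends"
proof (unfold S3_def, intro allI impI)
  fix \<beta> :: "'v \<Rightarrow> int"
  assume hb: "(\<Sum>x\<in>V. \<beta> x) mod 3 = 0"
  from assms(1) have fV: "finite V" and fE: "finite E"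
    and ep: "\<And>e. e\<in>E \<Longrightarrow> fst (ends e) \<in> V \<and> snd (ends e) \<in> V \<and> fst (ends e) \<noteq> snd (ends e)"
    unfolding multigraph_def by auto
  have av: "a \<noteq> v" "a \<in> V" using ep[OF assms(4)] assms(7) by auto
  have bv: "b \<noteq> v" "b \<in> V" using ep[OF assms(5)] assms(8) by auto
  have e12: "e1 \<noteq> e2" "e2 \<noteq> e1" using assms(6) by auto
  define I where "I = {e\<in>E. incident ends e v}"
  have e1I: "e1 \<in> I" using assms(4,7) by (auto simp: I_def incident_def)
  have e2I: "e2 \<in> I" using assms(5,8) by (auto simp: I_def incident_def)
  define R where "R = I - {e1,e2}"
  have fI: "finite I" using fE by (simp add: I_def)
  have fR: "finite R" using fI by (simp add: R_def)
  have cI: "card I \<ge> 4" using assms(3) by (simp add: degree_def I_def)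
  have IR: "I = insert e1 (insert e2 R)" using e1I e2I by (auto simp: R_def)
  have e1R: "e1 \<notin> R" "e2 \<notin> R" by (auto simp: R_def)
  have cR: "card I = card R + 2" using IR e1R fR assms(6) by simp
  hence cR2: "card R \<ge> 2" using cI by simp
  obtain S where S: "S \<subseteq> R" "card S = 2" using obtain_subset_with_card_n[OF cR2] by blast
  then obtain r1 r2 where r12: "r1 \<in> R" "r2 \<in> R" "r1 \<noteq> r2"
    by (auto simp: card_2_iff)
  have RI: "R \<subseteq> I" by (auto simp: R_def)
  have inR: "\<And>e. e \<in> I \<Longrightarrow> e \<noteq> e1 \<Longrightarrow> e \<noteq> e2 \<Longrightarrow> e \<in> R" by (auto simp: R_def)
  define oth where "oth e = (if fst (ends e) = v then snd (ends e) else fst (ends e))" for e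
  define out where "out e = (v, oth e)" for e
  have oth: "oth e \<noteq> v \<and> oth e \<in> V \<and> (out e = ends e \<or> out e = prod.swap (ends e))"
    if "e \<in> I" for e
  proof -
    from that have eE: "e \<in> E" and inc: "incident ends e v" by (auto simp: I_def)
    obtain p q where pq: "ends e = (p, q)" by fastforce
    show ?thesis using ep[OF eE] inc pq by (auto simp: oth_def out_def incident_def)
  qed
  define sg where "sg s = (if s then 1 else -1::int)" for s
  define k where "k = int (card R)"
  obtain s1 s2 where ss: "(k - 2 + sg s1 + sg s2) mod 3 = \<beta> v mod 3"
  proof -
    have "(\<beta> v - k) mod 3 = 0 \<or> (\<beta> v - k) mod 3 = 1 \<or> (\<beta> v - k) mod 3 = 2" by presburger
    moreover
    { assume "(\<beta> v - k) mod 3 = 0"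
      hence "(k - 2 + sg True + sg True) mod 3 = \<beta> v mod 3" unfolding sg_def by presburger
      hence ?thesis using that by blast }
    moreover
    { assume "(\<beta> v - k) mod 3 = 1"
      hence "(k - 2 + sg True + sg False) mod 3 = \<beta> v mod 3" unfolding sg_def by presburger
      hence ?thesis using that by blast }
    moreover
    { assume "(\<beta> v - k) mod 3 = 2"
      hence "(k - 2 + sg False + sg False) mod 3 = \<beta> v mod 3" unfolding sg_def by presburger
      hence ?thesis using that by blast }
    ultimately show ?thesis by (elim disjE) auto
  qed
  define DR where "DR e = (if e = r1 then (if s1 then out e else prod.swap (out e))
     else if e = r2 then (if s2 then out e else prod.swap (out e)) else out e)" for e
  define c where "c x = (\<Sum>e\<in>R. gg (DR e) x)" for x
  have DRo: "(DR e = ends e \<or> DR e = prod.swap (ends e)) \<and> fst (DR e) \<in> V \<and> snd (DR e) \<in> V"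
    if "e \<in> R" for e
  proof -
    have h: "DR e = out e \<or> DR e = prod.swap (out e)" by (simp add: DR_def)
    have o: "oth e \<noteq> v \<and> oth e \<in> V \<and> (out e = ends e \<or> out e = prod.swap (ends e))"
      using oth[of e] that RI by auto
    obtain p q where pq: "ends e = (p, q)" by fastforce
    show ?thesis using h o pq assms(2) by (auto simp: out_def)
  qed
  have gv: "gg (DR e) v = (if e = r1 then sg s1 else if e = r2 then sg s2 else 1)"
    if "e \<in> R" for e
    using oth[of e] that RI by (auto simp: DR_def out_def gg_def sg_def)
  have cv: "c v = k - 2 + sg s1 + sg s2"
  proof -
    have "c v = (\<Sum>e\<in>R. 1 + (if e = r1 then sg s1 - 1 else 0) + (if e = r2 then sg s2 - 1 else 0))"
      unfolding c_def using r12 by (intro sum.cong refl) (auto simp: gv)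
    also have "\<dots> = k - 2 + sg s1 + sg s2"
      using fR r12 by (simp add: sum.distrib sum.delta' k_def)
    finally show ?thesis .
  qed
  have csum: "(\<Sum>x\<in>V. c x) = 0"
    unfolding c_def
    by (subst sum.swap) (rule sum.neutral, auto intro: g_sum_zero fV dest: DRo)
  define \<beta>' where "\<beta>' x = \<beta> x - c x" for x
  have lv: "lift_V V v = V - {v}" by (simp add: lift_V_def)
  have sumb': "(\<Sum>x\<in>lift_V V v. \<beta>' x) mod 3 = 0"
  proof -
    have "(\<Sum>x\<in>V-{v}. \<beta>' x) = (\<Sum>x\<in>V. \<beta> x) - \<beta> v - ((\<Sum>x\<in>V. c x) - c v)"
      using fV assms(2) by (simp add: \<beta>'_def sum_subtractf sum_diff1)
    hence "(\<Sum>x\<in>V-{v}. \<beta>' x) = (\<Sum>x\<in>V. \<beta> x) - \<beta> v + c v" using csum by simp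
    moreover have "(\<Sum>x\<in>V. \<beta> x) mod 3 = 0" by (rule hb)
    moreover have "c v mod 3 = \<beta> v mod 3" using cv ss by simp
    ultimately show ?thesis using lv mod3a by metis
  qed
  define E' where "E' = lift_E E ends v"
  define en' where "en' = lift_ends ends a b"
  obtain D' where oD': "is_orientation E' en' D'" and sD': "strongly_connected (V - {v}) E' D'"
    and mD': "\<forall>x\<in>V-{v}. (int (outdeg E' D' x) - int (indeg E' D' x)) mod 3 = \<beta>' x mod 3"
    using assms(10)[unfolded S3_def, rule_format, OF sumb'] unfolding E'_def en'_def lv by blast
  have EI: "{e\<in>E. \<not> incident ends e v} = E - I" by (auto simp: I_def)
  have E'eq: "E' = insert None (Some ` (E - I))" by (simp add: E'_def lift_E_def EI)
  have fE': "finite E'" using E'eq fE by simp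
  have D'None: "D' None = (a,b) \<or> D' None = (b,a)"
    using oD' E'eq by (auto simp: is_orientation_def en'_def lift_ends_def)
  have D'Some: "D' (Some e) = ends e \<or> D'(Some e) = prod.swap (ends e)" if "e \<in> E - I" for e
    using oD' E'eq that by (auto simp: is_orientation_def en'_def lift_ends_def)
  define D where "D e = (if e \<in> I then
      (if e = e1 then (if D' None = (a,b) then (a,v) else (v,a))
       else if e = e2 then (if D' None = (a,b) then (v,b) else (b,v)) else DR e)
      else D' (Some e))" for e
  have DR_D: "D e = DR e" if "e \<in> R" for e using that e1R RI by (auto simp: D_def)
  show "\<exists>D. is_orientation E ends D \<and> strongly_connected V E D \<and>
             (\<forall>x\<in>V. (int (outdeg E D x) - int (indeg E D x)) mod 3 = \<beta> x mod 3)"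
  proof (intro exI[of _ D] conjI)
    show "is_orientation E ends D"
      unfolding is_orientation_def
    proof
      fix e assume eE: "e \<in> E"
      show "D e = ends e \<or> D e = prod.swap (ends e)"
      proof (cases "e \<in> I")
        case False thus ?thesis using D'Some[of e] eE by (simp add: D_def)
      next
        case True
        show ?thesis
        proof (cases "e = e1")
          case True
          have "D e1 = (if D' None = (a,b) then (a,v) else (v,a))" using e1I by (simp add: D_def)
          thus ?thesis using True assms(7) by (cases "D' None = (a,b)") auto
        next
          case n1: False
          show ?thesis
          proof (cases "e = e2")
            case True
            have "D e2 = (if D' None = (a,b) then (v,b) else (b,v))" using e2I e12 by (simp add: D_def)
            thus ?thesis using True assms(8) by (cases "D' None = (a,b)") auto
          next
            case False
            hence "e \<in> R" using inR True n1 by blast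
            thus ?thesis using DR_D DRo by auto
          qed
        qed
      qed
    qed
    let ?Rel = "D ` E"
    have sub: "D' ` E' \<subseteq> ?Rel\<^sup>*"
    proof
      fix p assume "p \<in> D' ` E'"
      then obtain eo where eo: "eo \<in> E'" "p = D' eo" by blast
      show "p \<in> ?Rel\<^sup>*"
      proof (cases eo)
        case None
        have d1: "D e1 \<in> ?Rel" "D e2 \<in> ?Rel" using assms(4,5) by auto
        show ?thesis
        proof (cases "D' None = (a,b)")
          case True
          hence "(a,v) \<in> ?Rel" "(v,b) \<in> ?Rel" using d1 e1I e2I e12 by (auto simp: D_def)
          thus ?thesis using eo None True by (metis converse_rtrancl_into_rtrancl r_into_rtrancl)
        next
          case False
          hence F: "D' None = (b,a)" using D'None by auto
          have "(v,a) \<in> ?Rel" "(b,v) \<in> ?Rel" using d1 e1I e2I e12 False by (auto simp: D_def)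
          thus ?thesis using eo None F by (metis converse_rtrancl_into_rtrancl r_into_rtrancl)
        qed
      next
        case (Some e)
        hence "e \<in> E - I" using eo E'eq by auto
        hence "D e = D' (Some e)" "e \<in> E" by (auto simp: D_def)
        thus ?thesis using eo Some by (metis image_eqI r_into_rtrancl)
      qed
    qed
    have lift: "(x,y) \<in> ?Rel\<^sup>*" if "x \<in> V - {v}" "y \<in> V - {v}" for x y
      using sD' that rtrancl_subset_rtrancl[OF sub] by (auto simp: strongly_connected_def)
    obtain u w where uw: "u \<in> V - {v}" "w \<in> V - {v}" "(v,u) \<in> ?Rel" "(w,v) \<in> ?Rel"
    proof (cases "D' None = (a,b)")
      case True
      hence "(a,v) \<in> ?Rel" "(v,b) \<in> ?Rel" using assms(4,5) e1I e2I e12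
        by (auto simp: D_def intro!: image_eqI)
      thus ?thesis using that av bv by blast
    next
      case False
      hence "(v,a) \<in> ?Rel" "(b,v) \<in> ?Rel" using assms(4,5) e1I e2I e12
        by (auto simp: D_def intro!: image_eqI)
      thus ?thesis using that av bv by blast
    qed
    show "strongly_connected V E D"
      unfolding strongly_connected_def
    proof (intro ballI)
      fix x y assume xy: "x \<in> V" "y \<in> V"
      have tov: "(z, v) \<in> ?Rel\<^sup>*" if "z \<in> V" for z
      proof (cases "z = v")
        case False thus ?thesis using lift[of z w] uw that
          by (meson DiffI empty_iff insert_iff rtrancl.rtrancl_into_rtrancl)
      qed simp
      have fromv: "(v, z) \<in> ?Rel\<^sup>*" if "z \<in> V" for z
      proof (cases "z = v")
        case False thus ?thesis using lift[of u z] uw that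
          by (meson DiffI empty_iff insert_iff converse_rtrancl_into_rtrancl)
      qed simp
      show "(x, y) \<in> ?Rel\<^sup>*" using tov[OF xy(1)] fromv[OF xy(2)] by (meson rtrancl_trans)
    qed
    show "\<forall>x\<in>V. (int (outdeg E D x) - int (indeg E D x)) mod 3 = \<beta> x mod 3"
    proof
      fix x assume xV: "x \<in> V"
      have sE: "(\<Sum>e\<in>E. gg (D e) x) = (\<Sum>e\<in>E-I. gg (D' (Some e)) x) + gg (D e1) x + gg (D e2) x + c x"
      proof -
        have "I \<subseteq> E" by (auto simp: I_def)
        hence "(\<Sum>e\<in>E. gg (D e) x) = (\<Sum>e\<in>E-I. gg (D e) x) + (\<Sum>e\<in>I. gg (D e) x)"
          using fE by (rule sum.subset_diff)
        also have "(\<Sum>e\<in>E-I. gg (D e) x) = (\<Sum>e\<in>E-I. gg (D' (Some e)) x)"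
          by (intro sum.cong refl) (simp add: D_def)
        also have "(\<Sum>e\<in>I. gg (D e) x) = gg (D e1) x + (gg (D e2) x + (\<Sum>e\<in>R. gg (D e) x))"
          using IR fR e1R e12 by simp
        also have "(\<Sum>e\<in>R. gg (D e) x) = c x"
          unfolding c_def by (intro sum.cong refl) (simp add: DR_D)
        finally show ?thesis by simp
      qed
      have sE': "(\<Sum>eo\<in>E'. gg (D' eo) x) = gg (D' None) x + (\<Sum>e\<in>E-I. gg (D' (Some e)) x)"
        using fE by (simp add: E'eq sum.reindex)
      have n1: "int (outdeg E D x) - int (indeg E D x) = (\<Sum>e\<in>E. gg (D e) x)"
        by (rule net_eq[OF fE])
      show "(int (outdeg E D x) - int (indeg E D x)) mod 3 = \<beta> x mod 3"
      proof (cases "x = v")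
        case False
        have d1: "D e1 = (if D' None = (a,b) then (a,v) else (v,a))" using e1I by (simp add: D_def)
        have d2: "D e2 = (if D' None = (a,b) then (v,b) else (b,v))" using e2I e12 by (simp add: D_def)
        have g12: "gg (D e1) x + gg (D e2) x = gg (D' None) x"
        proof (cases "D' None = (a,b)")
          case True thus ?thesis using d1 d2 False by (simp add: gg_def)
        next
          case F: False
          hence "D' None = (b,a)" using D'None by auto
          thus ?thesis using d1 d2 False F by (simp add: gg_def)
        qed
        have "(int (outdeg E' D' x) - int (indeg E' D' x)) mod 3 = \<beta>' x mod 3"
          using mD' xV False by auto
        hence "(\<Sum>eo\<in>E'. gg (D' eo) x) mod 3 = (\<beta> x - c x) mod 3"
          by (simp add: net_eq[OF fE'] \<beta>'_def)
        hence "((\<Sum>eo\<in>E'. gg (D' eo) x) + c x) mod 3 = \<beta> x mod 3" by (rule mod3b)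
        moreover have "(\<Sum>e\<in>E. gg (D e) x) = (\<Sum>eo\<in>E'. gg (D' eo) x) + c x"
          using sE sE' g12 by simp
        ultimately show ?thesis using n1 by simp
      next
        case True
        have z: "(\<Sum>e\<in>E-I. gg (D' (Some e)) x) = 0"
        proof (rule sum.neutral, rule ballI)
          fix e assume e: "e \<in> E - I"
          hence "\<not> incident ends e v" by (auto simp: I_def)
          thus "gg (D' (Some e)) x = 0" using D'Some[OF e] True
            by (auto simp: gg_def incident_def)
        qed
        have g12: "gg (D e1) x + gg (D e2) x = 0"
          using D'None e1I e2I e12 True av bv by (auto simp: D_def gg_def)
        show ?thesis using n1 sE z g12 cv ss True by simp
      qed
    qed
  qed
qed

end
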